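(* For every $\delta>0$ there exists $\varepsilon'>0$ such that the following holds for every $\varepsilon\in(0,\varepsilon')$ and every sufficiently large $n$. Let $s'$ be a positive integer, let $H_1,H_2$ be vertex-disjoint multigraphs, each on $n$ vertices, in each of which every pair of vertices is joined by exactly $s'$ parallel edges, let $H=(V(H_1)\cup V(H_2),E(H_1)\cup E(H_2))$, and let $b\leq (1-\delta)\frac{s'n}{\log(n)}$. Then the strategy $\mathcal{S}^+$ is a winning strategy for Maker in the game $\mathrm{MinDeg}^+\!\left(H,\frac{\varepsilon s'n}{b},b,\varepsilon\right)$.
   Context: $\log$ is the natural logarithm. For a multigraph $G$, real $d>0$, integer $b\geq 1$ and $\alpha\in(0,1)$, the game $\mathrm{MinDeg}^+(G,d,b,\alpha)$ is a $(1:b)$ Maker-Breaker game on the edges of $G$ in which Breaker moves first: in each round Breaker claims $b$ unclaimed edges and Maker claims one edge. Whenever Maker claims an edge she immediately gives it a direction; Maker is allowed to claim the same edge twice in two different rounds, so as to give it both directions. Let $d_M^+(v)$ denote Maker's outdegree at $v$, $d_B(v)$ the number of Breaker's edges at $v$, and $d_G(v)$ the degree of $v$ in $G$. Maker wins if for every vertex $v\in V(G)$ she reaches $d_M^+(v)=d$ before $d_B(v)\geq(1-\alpha)d_G(v)$ first happens. A vertex $v$ is called active as long as $d_M^+(v)<d$, and its danger is $\mathrm{dang}(v)=d_B(v)-2b\cdot d_M^+(v)$. Strategy $\mathcal{S}^+$: in every round Maker picks an active vertex $v$ of largest danger, claims an arbitrary edge at $v$ that is not claimed by Breaker and is not already an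 outgoing Maker edge at $v$, and directs it to be outgoing at $v$. *)

theory Defs
  imports Complex_Main
begin

text \<open>A multigraph is given by a vertex set V, a finite set E of edge identifiers
and a map ends assigning to each edge its (two-element) set of endpoints.
Maker's claims are stored as directed pairs (e, v), meaning that Maker has
claimed edge e and directed it to be outgoing at v.\<close>

definition deg_in :: "('e \<Rightarrow> 'v set) \<Rightarrow> 'e set \<Rightarrow> 'v \<Rightarrow> nat" where
  "deg_in ends F v = card {e \<in> F. v \<in> ends e}"

definition outdeg :: "('e \<times> 'v) set \<Rightarrow> 'v \<Rightarrow> nat" where
  "outdeg M v = card {e. (e, v) \<in> M}"

definition unclaimed :: "'e set \<Rightarrow> 'e set \<Rightarrow> ('e \<times> 'v) set \<Rightarrow> 'e set" where
  "unclaimed E B M = {e \<in> E. e \<notin> B \<and> (\<forall>u. (e, u) \<notin> M)}"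

definition breaker_move ::
  "'e set \<Rightarrow> nat \<Rightarrow> 'e set \<Rightarrow> ('e \<times> 'v) set \<Rightarrow> 'e set \<Rightarrow> bool" where
  "breaker_move E b B M B' \<longleftrightarrow>
     B \<subseteq> B' \<and> B' - B \<subseteq> unclaimed E B M \<and>
     card (B' - B) = min b (card (unclaimed E B M))"

definition active :: "real \<Rightarrow> ('e \<times> 'v) set \<Rightarrow> 'v \<Rightarrow> bool" where
  "active d M v \<longleftrightarrow> real (outdeg M v) < d"

definition dang :: "('e \<Rightarrow> 'v set) \<Rightarrow> nat \<Rightarrow> 'e set \<Rightarrow> ('e \<times> 'v) set \<Rightarrow> 'v \<Rightarrow> real" where
  "dang ends b B M v = real (deg_in ends B v) - 2 * real b * real (outdeg M v)"

definition splus_move ::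
  "'v set \<Rightarrow> 'e set \<Rightarrow> ('e \<Rightarrow> 'v set) \<Rightarrow> real \<Rightarrow> nat \<Rightarrow> 'e set \<Rightarrow> ('e \<times> 'v) set
     \<Rightarrow> ('e \<times> 'v) set \<Rightarrow> bool" where
  "splus_move V E ends d b B M M' \<longleftrightarrow>
     (\<exists>v e. v \<in> V \<and> active d M v \<and>
        (\<forall>u \<in> V. active d M u \<longrightarrow> dang ends b B M u \<le> dang ends b B M v) \<and>
        e \<in> E \<and> v \<in> ends e \<and> e \<notin> B \<and> (e, v) \<notin> M \<and> M' = insert (e, v) M)"

text \<open>Bs i = Breaker's edges after Breaker's move in round i;
  Ms i = Maker's arcs before round i (Ms (Suc i) after Maker's move in round i).\<close>
definition splus_play ::
  "'v set \<Rightarrow> 'e set \<Rightarrow> ('e \<Rightarrow> 'v set) \<Rightarrow> real \<Rightarrow> nat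
     \<Rightarrow> (nat \<Rightarrow> 'e set) \<Rightarrow> (nat \<Rightarrow> ('e \<times> 'v) set) \<Rightarrow> bool" where
  "splus_play V E ends d b Bs Ms \<longleftrightarrow>
     Ms 0 = {} \<and> breaker_move E b {} (Ms 0) (Bs 0) \<and>
     (\<forall>i. (if (\<exists>M'. splus_move V E ends d b (Bs i) (Ms i) M')
           then splus_move V E ends d b (Bs i) (Ms i) (Ms (Suc i))
           else Ms (Suc i) = Ms i) \<and>
          breaker_move E b (Bs i) (Ms (Suc i)) (Bs (Suc i)))"

definition maker_wins ::
  "'v set \<Rightarrow> 'e set \<Rightarrow> ('e \<Rightarrow> 'v set) \<Rightarrow> real \<Rightarrow> real
     \<Rightarrow> (nat \<Rightarrow> 'e set) \<Rightarrow> (nat \<Rightarrow> ('e \<times> 'v) set) \<Rightarrow> bool" where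
  "maker_wins V E ends d \<alpha> Bs Ms \<longleftrightarrow>
     (\<forall>v \<in> V. \<exists>t. real (outdeg (Ms t) v) \<ge> d \<and>
        (\<forall>i<t. real (deg_in ends (Bs i) v) < (1 - \<alpha>) * real (deg_in ends E v)))"

definition splus_winning ::
  "'v set \<Rightarrow> 'e set \<Rightarrow> ('e \<Rightarrow> 'v set) \<Rightarrow> real \<Rightarrow> nat \<Rightarrow> real \<Rightarrow> bool" where
  "splus_winning V E ends d b \<alpha> \<longleftrightarrow>
     (\<forall>Bs Ms. splus_play V E ends d b Bs Ms \<longrightarrow> maker_wins V E ends d \<alpha> Bs Ms)"

definition two_multicliques ::
  "'v set \<Rightarrow> 'v set \<Rightarrow> 'e set \<Rightarrow> ('e \<Rightarrow> 'v set) \<Rightarrow> nat \<Rightarrow> nat \<Rightarrow> bool" where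
  "two_multicliques V1 V2 E ends n s \<longleftrightarrow>
     finite V1 \<and> finite V2 \<and> card V1 = n \<and> card V2 = n \<and> V1 \<inter> V2 = {} \<and> finite E \<and>
     (\<forall>e \<in> E. card (ends e) = 2 \<and> (ends e \<subseteq> V1 \<or> ends e \<subseteq> V2)) \<and>
     (\<forall>x \<in> V1. \<forall>y \<in> V1. x \<noteq> y \<longrightarrow> card {e \<in> E. ends e = {x, y}} = s) \<and>
     (\<forall>x \<in> V2. \<forall>y \<in> V2. x \<noteq> y \<longrightarrow> card {e \<in> E. ends e = {x, y}} = s)"

end

theory Submission
  imports Defs
begin

lemma card_filter_sum: "finite B \<Longrightarrow> card {e\<in>B. P e} = (\<Sum>e\<in>B. if P e then 1 else (0::nat))"
  by (simp add: sum.If_cases Int_def)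

lemma deg_in_Un:
  assumes "finite B" "finite N" "B \<inter> N = {}"
  shows "deg_in ends (B \<union> N) u = deg_in ends B u + deg_in ends N u"
proof -
  have "{e \<in> B \<union> N. u \<in> ends e} = {e \<in> B. u \<in> ends e} \<union> {e \<in> N. u \<in> ends e}" by auto
  then show ?thesis unfolding deg_in_def using assms
    by (simp add: card_Un_disjoint disjoint_iff)
qed

lemma degsum_swap:
  assumes "finite B" "finite A"
  shows "(\<Sum>u\<in>A. deg_in ends B u) = (\<Sum>e\<in>B. card (ends e \<inter> A))"
proof -
  have "(\<Sum>u\<in>A. deg_in ends B u) = (\<Sum>u\<in>A. \<Sum>e\<in>B. if u \<in> ends e then 1 else (0::nat))"
    unfolding deg_in_def using assms by (simp add: card_filter_sum)
  also have "\<dots> = (\<Sum>e\<in>B. \<Sum>u\<in>A. if u \<in> ends e then 1 else (0::nat))"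
    by (rule sum.swap)
  also have "\<dots> = (\<Sum>e\<in>B. card (ends e \<inter> A))"
  proof (rule sum.cong)
    fix e assume "e \<in> B"
    have "card (ends e \<inter> A) = card {u\<in>A. u \<in> ends e}" by (metis Collect_conj_eq Collect_mem_eq Int_commute Int_def)
    then show "(\<Sum>u\<in>A. if u \<in> ends e then 1 else (0::nat)) = card (ends e \<inter> A)"
      using assms by (simp add: card_filter_sum)
  qed simp
  finally show ?thesis .
qed

lemma degsum_le2:
  assumes "finite N" "finite A" "\<forall>e\<in>N. card (ends e) = 2"
  shows "(\<Sum>u\<in>A. deg_in ends N u) \<le> 2 * card N"
proof -
  have "(\<Sum>u\<in>A. deg_in ends N u) = (\<Sum>e\<in>N. card (ends e \<inter> A))" using degsum_swap assms by blast
  also have "\<dots> \<le> (\<Sum>e\<in>N. 2)"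
  proof (rule sum_mono)
    fix e assume "e \<in> N"
    then have "card (ends e) = 2" using assms by auto
    then have "finite (ends e)" by (metis card.infinite zero_neq_numeral)
    then show "card (ends e \<inter> A) \<le> 2" using \<open>card (ends e) = 2\<close> by (metis Int_lower1 card_mono)
  qed
  finally show ?thesis by simp
qed

lemma touch_le_degsum:
  assumes "finite B" "finite A"
  shows "card {e\<in>B. ends e \<inter> A \<noteq> {}} \<le> (\<Sum>u\<in>A. deg_in ends B u)"
proof -
  have "card {e\<in>B. ends e \<inter> A \<noteq> {}} = (\<Sum>e\<in>B. if ends e \<inter> A \<noteq> {} then 1 else (0::nat))"
    using assms by (simp add: card_filter_sum)
  also have "\<dots> \<le> (\<Sum>e\<in>B. card (ends e \<inter> A))"
  proof (rule sum_mono)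
    fix e
    have "ends e \<inter> A \<noteq> {} \<Longrightarrow> 1 \<le> card (ends e \<inter> A)" using assms(2)
      by (simp add: Suc_leI card_gt_0_iff)
    then show "(if ends e \<inter> A \<noteq> {} then 1 else 0) \<le> card (ends e \<inter> A)" by auto
  qed
  finally show ?thesis using degsum_swap[OF assms] by simp
qed

lemma touch_Un:
  assumes "finite B" "finite N"
  shows "card {e\<in>B \<union> N. P e} \<le> card {e\<in>B. P e} + card N"
proof -
  have "{e\<in>B \<union> N. P e} \<subseteq> {e\<in>B. P e} \<union> N" by auto
  then have "card {e\<in>B \<union> N. P e} \<le> card ({e\<in>B. P e} \<union> N)" using assms by (intro card_mono) auto
  also have "\<dots> \<le> card {e\<in>B. P e} + card N" by (rule card_Un_le)
  finally show ?thesis .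
qed

lemma touch_insert:
  assumes "finite B"
  shows "card {e\<in>B. ends e \<inter> insert x A \<noteq> {}} + card {e\<in>B. x \<in> ends e \<and> ends e \<inter> A \<noteq> {}}
     = card {e\<in>B. ends e \<inter> A \<noteq> {}} + deg_in ends B x"
proof -
  let ?T = "{e\<in>B. ends e \<inter> A \<noteq> {}}"
  let ?P = "{e\<in>B. x \<in> ends e \<and> ends e \<inter> A = {}}"
  let ?Q = "{e\<in>B. x \<in> ends e \<and> ends e \<inter> A \<noteq> {}}"
  have 1: "{e\<in>B. ends e \<inter> insert x A \<noteq> {}} = ?T \<union> ?P" by auto
  have 2: "{e\<in>B. x \<in> ends e} = ?Q \<union> ?P" by auto
  have "card (?T \<union> ?P) = card ?T + card ?P" using assms by (intro card_Un_disjoint) auto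
  moreover have "card (?Q \<union> ?P) = card ?Q + card ?P" using assms by (intro card_Un_disjoint) auto
  ultimately show ?thesis unfolding deg_in_def 1 2 by simp
qed

lemma outdeg_insert:
  assumes "finite M" "(e, x) \<notin> M"
  shows "outdeg (insert (e, x) M) w = outdeg M w + (if w = x then 1 else 0)"
proof -
  have fin: "finite {f. (f, w) \<in> M}"
  proof -
    have "{f. (f, w) \<in> M} \<subseteq> fst ` M" by force
    then show ?thesis using assms finite_subset by blast
  qed
  show ?thesis
  proof (cases "w = x")
    case True
    then have "{f. (f, w) \<in> insert (e, x) M} = insert e {f. (f, w) \<in> M}" by auto
    then show ?thesis unfolding outdeg_def using True fin assms by simp
  next
    case False
    then show ?thesis unfolding outdeg_def by simp
  qed
qed

lemma outdeg_mono:
  assumes "M \<subseteq> M'" "finite M'"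
  shows "outdeg M w \<le> outdeg M' w"
proof -
  have "{f. (f, w) \<in> M'} \<subseteq> fst ` M'" by force
  then have "finite {f. (f, w) \<in> M'}" using assms finite_subset by blast
  then show ?thesis unfolding outdeg_def by (rule card_mono) (use assms in auto)
qed

definition SS :: "('e \<Rightarrow> 'v set) \<Rightarrow> nat \<Rightarrow> 'e set \<Rightarrow> ('e \<times> 'v) set \<Rightarrow> 'v set \<Rightarrow> real" where
  "SS ends b B M A = (\<Sum>u\<in>A. dang ends b B M u)"

definition PN :: "('e \<Rightarrow> 'v set) \<Rightarrow> nat \<Rightarrow> 'e set \<Rightarrow> ('e \<times> 'v) set \<Rightarrow> 'v set \<Rightarrow> real" where
  "PN ends b B M A = real (card {e\<in>B. ends e \<inter> A \<noteq> {}}) - 2 * real b * (\<Sum>u\<in>A. real (outdeg M u))"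

lemma SS_insert: "finite A \<Longrightarrow> x \<notin> A \<Longrightarrow> SS ends b B M (insert x A) = SS ends b B M A + dang ends b B M x"
  unfolding SS_def by simp

lemma PN_insert:
  assumes "finite A" "x \<notin> A" "finite B"
  shows "PN ends b B M (insert x A) = PN ends b B M A + dang ends b B M x
           - real (card {e\<in>B. x \<in> ends e \<and> ends e \<inter> A \<noteq> {}})"
proof -
  have "real (card {e\<in>B. ends e \<inter> insert x A \<noteq> {}}) = real (card {e\<in>B. ends e \<inter> A \<noteq> {}}) + real (deg_in ends B x)
      - real (card {e\<in>B. x \<in> ends e \<and> ends e \<inter> A \<noteq> {}})"
    using touch_insert[OF assms(3), of ends x A] by linarith
  then show ?thesis unfolding PN_def dang_def using assms by (simp add: algebra_simps)
qed

lemma PN_le_SS: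
  assumes "finite A" "finite B"
  shows "PN ends b B M A \<le> SS ends b B M A"
proof -
  have "real (card {e\<in>B. ends e \<inter> A \<noteq> {}}) \<le> real (\<Sum>u\<in>A. deg_in ends B u)"
    using touch_le_degsum[OF assms(2,1), of ends] by linarith
  then show ?thesis unfolding PN_def SS_def dang_def by (simp add: sum_subtractf sum_distrib_left)
qed

lemma dang_step:
  assumes "finite B" "finite N" "B \<inter> N = {}" "finite M" "(e, x) \<notin> M"
  shows "dang ends b (B \<union> N) (insert (e, x) M) u = dang ends b B M u + real (deg_in ends N u)
          - (if u = x then 2 * real b else 0)"
  unfolding dang_def by (simp add: deg_in_Un[OF assms(1-3)] outdeg_insert[OF assms(4,5)] algebra_simps)

lemma SS_step:
  assumes "finite B" "finite N" "B \<inter> N = {}" "finite M" "(e, x) \<notin> M" "finite A"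
    "\<forall>e\<in>N. card (ends e) = 2"
  shows "SS ends b (B \<union> N) (insert (e, x) M) A \<le> SS ends b B M A + 2 * real (card N)
          - (if x \<in> A then 2 * real b else 0)"
proof -
  have "SS ends b (B \<union> N) (insert (e, x) M) A = (\<Sum>u\<in>A. dang ends b B M u + real (deg_in ends N u)
          - (if u = x then 2 * real b else 0))"
    unfolding SS_def using dang_step[OF assms(1-5)] by simp
  also have "\<dots> = SS ends b B M A + real (\<Sum>u\<in>A. deg_in ends N u) - (if x \<in> A then 2 * real b else 0)"
    unfolding SS_def using assms(6) by (simp only: sum_subtractf sum.distrib sum.delta of_nat_sum)
  finally show ?thesis using degsum_le2[OF assms(2,6,7)] by linarith
qed

lemma PN_step:
  assumes "finite B" "finite N" "B \<inter> N = {}" "finite M" "(e, x) \<notin> M" "finite A"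
  shows "PN ends b (B \<union> N) (insert (e, x) M) A \<le> PN ends b B M A + real (card N)
          - (if x \<in> A then 2 * real b else 0)"
proof -
  have "real (card {e\<in>B \<union> N. ends e \<inter> A \<noteq> {}}) \<le> real (card {e\<in>B. ends e \<inter> A \<noteq> {}}) + real (card N)"
    using touch_Un[OF assms(1,2), of "\<lambda>e. ends e \<inter> A \<noteq> {}"] by (simp only: of_nat_add[symmetric] of_nat_le_iff)
  moreover have "(\<Sum>u\<in>A. real (outdeg (insert (e, x) M) u)) = (\<Sum>u\<in>A. real (outdeg M u)) + (if x \<in> A then 1 else 0)"
  proof -
    have "(\<Sum>u\<in>A. real (outdeg (insert (e, x) M) u)) = (\<Sum>u\<in>A. real (outdeg M u) + (if u = x then 1 else 0))"
      using outdeg_insert[OF assms(4,5)] by (intro sum.cong) auto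
    also have "\<dots> = (\<Sum>u\<in>A. real (outdeg M u)) + (if x \<in> A then 1 else 0)"
      using assms(6) by (simp only: sum.distrib sum.delta)
    finally show ?thesis .
  qed
  ultimately show ?thesis unfolding PN_def by (cases "x \<in> A") (simp_all add: algebra_simps)
qed

lemma sum_le_max:
  assumes "finite A" "\<forall>w\<in>A. dang ends b B M w \<le> dang ends b B M x"
  shows "SS ends b B M A \<le> real (card A) * dang ends b B M x"
  unfolding SS_def by (rule sum_bounded_above) (use assms in auto)

lemma frac_cross:
  fixes a c k l :: real
  assumes "k > 0" "l > 0" "a * l \<le> c * k"
  shows "a / k \<le> c / l"
proof -
  have "a / k = (a * l) / (k * l)" using assms by simp
  also have "\<dots> \<le> (c * k) / (k * l)" using assms by (intro divide_right_mono) auto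
  also have "\<dots> = c / l" using assms by simp
  finally show ?thesis .
qed

lemma div_le_add:
  fixes a c k :: real
  assumes "k > 0" "a \<le> c + t"
  shows "a / k \<le> c / k + t / k"
proof -
  have "a / k \<le> (c + t) / k" using assms by (intro divide_right_mono) auto
  then show ?thesis by (simp add: add_divide_distrib)
qed

lemma Phi_step:
  assumes "finite B" "finite N" "B \<inter> N = {}" "finite M" "(e, x) \<notin> M" "finite A" "A \<noteq> {}"
    "\<forall>e\<in>N. card (ends e) = 2" "card N \<le> b"
    "\<forall>w\<in>A. dang ends b B M w \<le> dang ends b B M x"
  shows "SS ends b (B \<union> N) (insert (e, x) M) A / card A \<le>
     SS ends b B M (insert x A) / card (insert x A) + (if x \<in> A then 0 else 2 * real b / card A)"
proof -
  let ?k = "real (card A)"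
  let ?S' = "SS ends b (B \<union> N) (insert (e, x) M) A"
  let ?S = "SS ends b B M A"
  have kpos: "?k > 0" using assms(6,7) by (simp add: card_gt_0_iff)
  have cN: "real (card N) \<le> real b" using assms(9) by simp
  have st0: "?S' \<le> ?S + 2 * real (card N) - (if x \<in> A then 2 * real b else 0)"
    by (rule SS_step[OF assms(1-6,8)])
  show ?thesis
  proof (cases "x \<in> A")
    case True
    then have iA: "insert x A = A" by auto
    have "?S' \<le> ?S" using st0 cN True by simp
    then have "?S' / ?k \<le> ?S / ?k" using kpos by (intro divide_right_mono) auto
    then show ?thesis using True iA by simp
  next
    case False
    have ci: "real (card (insert x A)) = ?k + 1" using False assms(6) by simp
    have mx: "?S \<le> ?k * dang ends b B M x" by (rule sum_le_max[OF assms(6,10)])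
    have "?S / ?k \<le> SS ends b B M (insert x A) / (?k + 1)"
    proof (rule frac_cross)
      show "?S * (?k + 1) \<le> SS ends b B M (insert x A) * ?k"
        unfolding SS_insert[OF assms(6) False] using mx by (simp add: algebra_simps)
    qed (use kpos in auto)
    moreover have "?S' / ?k \<le> ?S / ?k + 2 * real b / ?k"
      using st0 False cN kpos by (intro div_le_add) auto
    ultimately show ?thesis using False ci by simp
  qed
qed

lemma Psi_step:
  assumes "finite B" "finite N" "B \<inter> N = {}" "finite M" "(e, x) \<notin> M" "finite A" "A \<noteq> {}"
    "card N \<le> b"
    "\<forall>w\<in>A. dang ends b B M w \<le> dang ends b B M x"
    "x \<notin> A \<Longrightarrow> card {e\<in>B. x \<in> ends e \<and> ends e \<inter> A \<noteq> {}} \<le> s * card A"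
  shows "PN ends b (B \<union> N) (insert (e, x) M) A / card A \<le>
     PN ends b B M (insert x A) / card (insert x A) + (if x \<in> A then 0 else real b / card A + real s)"
proof -
  let ?k = "real (card A)"
  let ?P' = "PN ends b (B \<union> N) (insert (e, x) M) A"
  let ?P = "PN ends b B M A"
  have kpos: "?k > 0" using assms(6,7) by (simp add: card_gt_0_iff)
  have cN: "real (card N) \<le> real b" using assms(8) by simp
  have st0: "?P' \<le> ?P + real (card N) - (if x \<in> A then 2 * real b else 0)"
    by (rule PN_step[OF assms(1-6)])
  show ?thesis
  proof (cases "x \<in> A")
    case True
    then have iA: "insert x A = A" by auto
    have "?P' \<le> ?P" using st0 cN True by simp
    then have "?P' / ?k \<le> ?P / ?k" using kpos by (intro divide_right_mono) auto
    then show ?thesis using True iA by simp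
  next
    case False
    let ?c = "real (card {e\<in>B. x \<in> ends e \<and> ends e \<inter> A \<noteq> {}})"
    have cle: "?c \<le> real s * ?k" using assms(10)[OF False] by (simp only: of_nat_mult[symmetric] of_nat_le_iff)
    have ci: "real (card (insert x A)) = ?k + 1" using False assms(6) by simp
    have mx: "?P \<le> ?k * dang ends b B M x"
      using sum_le_max[OF assms(6,9)] PN_le_SS[OF assms(6,1), of ends b M] by linarith
    have pi: "PN ends b B M (insert x A) = ?P + dang ends b B M x - ?c"
      using PN_insert[OF assms(6) False assms(1)] .
    have "?P / ?k \<le> (PN ends b B M (insert x A) + real s * (?k + 1)) / (?k + 1)"
    proof (rule frac_cross)
      have "?c * ?k \<le> real s * ?k * (?k + 1)"
      proof -
        have "?c * ?k \<le> (real s * ?k) * ?k" using cle kpos by (intro mult_right_mono) auto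
        also have "\<dots> \<le> real s * ?k * (?k + 1)" using kpos by (intro mult_left_mono) auto
        finally show ?thesis .
      qed
      then show "?P * (?k + 1) \<le> (PN ends b B M (insert x A) + real s * (?k + 1)) * ?k"
        unfolding pi using mx by (simp add: algebra_simps)
    qed (use kpos in auto)
    also have "\<dots> = PN ends b B M (insert x A) / (?k + 1) + real s"
      using kpos by (simp add: add_divide_distrib)
    finally have a1: "?P / ?k \<le> PN ends b B M (insert x A) / (?k + 1) + real s" .
    moreover have "?P' / ?k \<le> ?P / ?k + real b / ?k"
      using st0 False cN kpos by (intro div_le_add) auto
    ultimately show ?thesis using False ci by simp
  qed
qed

definition H :: "nat \<Rightarrow> real" where "H k = (\<Sum>j\<in>{1..<k}. 1 / real j)"

lemma H_Suc: "k \<ge> 1 \<Longrightarrow> H (Suc k) = H k + 1 / real k"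
  unfolding H_def by simp

lemma H_mono: "k \<le> m \<Longrightarrow> H k \<le> H m"
  unfolding H_def by (rule sum_mono2) auto

lemma H_one: "H 1 = 0" unfolding H_def by simp

locale game =
  fixes V :: "'v set" and E :: "'e set" and ends :: "'e \<Rightarrow> 'v set" and d :: real and b :: nat
    and Bs :: "nat \<Rightarrow> 'e set" and Ms :: "nat \<Rightarrow> ('e \<times> 'v) set" and s :: nat and m :: nat
    and D :: real and Dg :: real and \<alpha> :: real
  assumes play: "splus_play V E ends d b Bs Ms"
    and finV: "finite V" and finE: "finite E"
    and ends2: "\<forall>e\<in>E. card (ends e) = 2 \<and> ends e \<subseteq> V"
    and pairs: "\<forall>x\<in>V. \<forall>y\<in>V. x \<noteq> y \<longrightarrow> card {e\<in>E. ends e = {x, y}} \<le> s"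
    and degV: "\<forall>x\<in>V. real (deg_in ends E x) \<ge> Dg"
    and Dstuck: "D \<le> Dg - (2 * real b + 1) * d"
    and mpos: "m \<ge> 1"
    and Dbig: "2 * real b + 2 * real b * real (card V) / real m + real b * H m + real s * real m < D"
    and alpha1: "\<alpha> \<le> 1"
    and Dalpha: "D \<le> (1 - \<alpha>) * Dg - 2 * real b * d"
begin

lemma play0: "Ms 0 = {}" "breaker_move E b {} (Ms 0) (Bs 0)"
  using play unfolding splus_play_def by auto

lemma playS: "(if (\<exists>M'. splus_move V E ends d b (Bs i) (Ms i) M')
           then splus_move V E ends d b (Bs i) (Ms i) (Ms (Suc i))
           else Ms (Suc i) = Ms i) \<and>
          breaker_move E b (Bs i) (Ms (Suc i)) (Bs (Suc i))"
  using play unfolding splus_play_def by blast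

lemma Bs_E: "Bs i \<subseteq> E"
proof (induction i)
  case 0
  then show ?case using play0(2) unfolding breaker_move_def unclaimed_def by auto
next
  case (Suc i)
  have "Bs (Suc i) - Bs i \<subseteq> E" using playS[of i] unfolding breaker_move_def unclaimed_def by auto
  then show ?case using Suc by auto
qed

lemma Bs_fin: "finite (Bs i)" using Bs_E finE finite_subset by blast

lemma Bs_step: "Bs i \<subseteq> Bs (Suc i)" "card (Bs (Suc i) - Bs i) \<le> b"
  using playS[of i] unfolding breaker_move_def by auto

lemma Bs0: "card (Bs 0) \<le> b"
  using play0(2) unfolding breaker_move_def by auto

lemma Ms_sub: "Ms i \<subseteq> E \<times> V"
proof (induction i)
  case 0
  then show ?case using play0 by auto
next
  case (Suc i)
  show ?case
  proof (cases "\<exists>M'. splus_move V E ends d b (Bs i) (Ms i) M'")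
    case True
    then have "splus_move V E ends d b (Bs i) (Ms i) (Ms (Suc i))" using playS[of i] by simp
    then show ?thesis using Suc unfolding splus_move_def by auto
  next
    case False
    then show ?thesis using playS[of i] Suc by simp
  qed
qed

lemma Ms_fin: "finite (Ms i)"
  using Ms_sub finE finV by (meson finite_SigmaI finite_subset)

lemma Ms_step: "Ms i \<subseteq> Ms (Suc i)"
proof (cases "\<exists>M'. splus_move V E ends d b (Bs i) (Ms i) M'")
  case True
  then have "splus_move V E ends d b (Bs i) (Ms i) (Ms (Suc i))" using playS[of i] by simp
  then show ?thesis unfolding splus_move_def by auto
next
  case False
  then show ?thesis using playS[of i] by simp
qed

lemma Ms_mono: "i \<le> j \<Longrightarrow> Ms i \<subseteq> Ms j"
  using lift_Suc_mono_le[of Ms, OF Ms_step] by blast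

lemma active_anti: "i \<le> j \<Longrightarrow> active d (Ms j) w \<Longrightarrow> active d (Ms i) w"
  unfolding active_def using outdeg_mono[OF Ms_mono Ms_fin] by (meson le_less_trans of_nat_le_iff)

lemma stuck:
  assumes "w \<in> V" "finite M" "B \<subseteq> E" "active d M w" "dang ends b B M w < D"
  shows "\<exists>e\<in>E. w \<in> ends e \<and> e \<notin> B \<and> (e, w) \<notin> M"
proof (rule ccontr)
  assume "\<not> ?thesis"
  then have sub: "{e\<in>E. w \<in> ends e} \<subseteq> {e\<in>B. w \<in> ends e} \<union> {e. (e, w) \<in> M}" by auto
  have finM: "finite {e. (e, w) \<in> M}"
  proof -
    have "{e. (e, w) \<in> M} \<subseteq> fst ` M" by force
    then show ?thesis using assms(2) finite_subset by blast
  qed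
  have finB: "finite {e\<in>B. w \<in> ends e}" using finite_subset[OF assms(3) finE] by simp
  have "deg_in ends E w \<le> card ({e\<in>B. w \<in> ends e} \<union> {e. (e, w) \<in> M})"
    unfolding deg_in_def using sub finM finB by (intro card_mono) auto
  also have "\<dots> \<le> deg_in ends B w + outdeg M w"
    unfolding deg_in_def outdeg_def by (rule card_Un_le)
  finally have "real (deg_in ends E w) \<le> real (deg_in ends B w) + real (outdeg M w)" by linarith
  moreover have "real (outdeg M w) < d" using assms(4) unfolding active_def .
  moreover have "Dg \<le> real (deg_in ends E w)" using degV assms(1) by auto
  moreover have "(2 * real b + 1) * real (outdeg M w) \<le> (2 * real b + 1) * d"
    using \<open>real (outdeg M w) < d\<close> by (intro mult_left_mono) auto
  ultimately have "dang ends b B M w \<ge> Dg - (2 * real b + 1) * d"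
    unfolding dang_def by (simp add: algebra_simps)
  then show False using assms(5) Dstuck by linarith
qed

lemma moves:
  assumes "\<forall>w\<in>V. active d (Ms i) w \<longrightarrow> dang ends b (Bs i) (Ms i) w < D"
    and "\<exists>w\<in>V. active d (Ms i) w"
  shows "splus_move V E ends d b (Bs i) (Ms i) (Ms (Suc i))"
proof -
  let ?S = "{w\<in>V. active d (Ms i) w}"
  let ?f = "dang ends b (Bs i) (Ms i)"
  have fin: "finite ?S" using finV by auto
  have ne: "?S \<noteq> {}" using assms(2) by auto
  have "Max (?f ` ?S) \<in> ?f ` ?S" using fin ne by (intro Max_in) auto
  then obtain v where v0: "v \<in> ?S" "?f v = Max (?f ` ?S)" by auto
  have v: "v \<in> ?S" "\<forall>w\<in>?S. ?f w \<le> ?f v" using v0 fin by auto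
  then obtain e where e: "e\<in>E" "v \<in> ends e" "e \<notin> Bs i" "(e, v) \<notin> Ms i"
    using stuck[of v "Ms i" "Bs i"] Ms_fin Bs_E assms(1) by auto
  have "splus_move V E ends d b (Bs i) (Ms i) (insert (e, v) (Ms i))"
    unfolding splus_move_def using v e by blast
  then show ?thesis using playS[of i] by (metis (full_types))
qed

lemma two_set_eq:
  assumes "card S = 2" "x \<in> S" "y \<in> S" "x \<noteq> y"
  shows "S = {x, y}"
proof -
  have fin: "finite S" using assms(1) by (metis card.infinite zero_neq_numeral)
  have "{x, y} \<subseteq> S" using assms by auto
  moreover have "card {x, y} = card S" using assms by simp
  ultimately show ?thesis using fin by (metis card_subset_eq)
qed

lemma cbound:
  assumes "x \<in> V" "A \<subseteq> V" "finite A" "x \<notin> A" "B \<subseteq> E"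
  shows "card {e\<in>B. x \<in> ends e \<and> ends e \<inter> A \<noteq> {}} \<le> s * card A"
proof -
  have sub: "{e\<in>B. x \<in> ends e \<and> ends e \<inter> A \<noteq> {}} \<subseteq> (\<Union>y\<in>A. {e\<in>E. ends e = {x, y}})"
  proof
    fix e assume e: "e \<in> {e\<in>B. x \<in> ends e \<and> ends e \<inter> A \<noteq> {}}"
    then obtain y where y: "y \<in> ends e" "y \<in> A" by auto
    have "e \<in> E" using e assms(5) by auto
    then have "card (ends e) = 2" using ends2 by auto
    moreover have "x \<noteq> y" using y assms(4) by auto
    moreover have "x \<in> ends e" using e by auto
    ultimately have "ends e = {x, y}" using two_set_eq[of "ends e" x y] y by auto
    then show "e \<in> (\<Union>y\<in>A. {e\<in>E. ends e = {x, y}})" using \<open>e \<in> E\<close> y by auto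
  qed
  have "card {e\<in>B. x \<in> ends e \<and> ends e \<inter> A \<noteq> {}} \<le> card (\<Union>y\<in>A. {e\<in>E. ends e = {x, y}})"
  proof (rule card_mono)
    have "(\<Union>y\<in>A. {e\<in>E. ends e = {x, y}}) \<subseteq> E" by auto
    then show "finite (\<Union>y\<in>A. {e\<in>E. ends e = {x, y}})" using finE finite_subset by blast
  qed (rule sub)
  also have "\<dots> \<le> (\<Sum>y\<in>A. card {e\<in>E. ends e = {x, y}})"
    using assms(3) by (rule card_UN_le)
  also have "\<dots> \<le> (\<Sum>y\<in>A. s)"
  proof (rule sum_mono)
    fix y assume "y \<in> A"
    then have "y \<in> V" "x \<noteq> y" using assms by auto
    then show "card {e\<in>E. ends e = {x, y}} \<le> s" using pairs assms(1) by blast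
  qed
  finally show ?thesis by (simp add: mult.commute)
qed

lemma inv: "\<forall>u\<in>V. active d (Ms t) u \<longrightarrow> dang ends b (Bs t) (Ms t) u < D"
proof (induction t rule: less_induct)
  case (less T)
  show ?case
  proof (rule ccontr)
    assume "\<not> ?case"
    then obtain u where u: "u \<in> V" "active d (Ms T) u" "dang ends b (Bs T) (Ms T) u \<ge> D" by force
    have mv: "splus_move V E ends d b (Bs i) (Ms i) (Ms (Suc i))" if "i < T" for i
    proof (rule moves)
      show "\<forall>w\<in>V. active d (Ms i) w \<longrightarrow> dang ends b (Bs i) (Ms i) w < D" using less.IH that by blast
      show "\<exists>w\<in>V. active d (Ms i) w" using u active_anti[of i T u] that by auto
    qed
    define P where "P i v e \<longleftrightarrow> v \<in> V \<and> active d (Ms i) v \<and>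
        (\<forall>w\<in>V. active d (Ms i) w \<longrightarrow> dang ends b (Bs i) (Ms i) w \<le> dang ends b (Bs i) (Ms i) v) \<and>
        e \<in> E \<and> v \<in> ends e \<and> e \<notin> Bs i \<and> (e, v) \<notin> Ms i \<and> Ms (Suc i) = insert (e, v) (Ms i)" for i v e
    have exP: "\<exists>v e. P i v e" if "i < T" for i
      using mv[OF that] unfolding splus_move_def P_def by blast
    define vv where "vv i = (SOME v. \<exists>e. P i v e)" for i
    define ee where "ee i = (SOME e. P i (vv i) e)" for i
    have Pv: "P i (vv i) (ee i)" if "i < T" for i
    proof -
      have "\<exists>e. P i (vv i) e" unfolding vv_def using exP[OF that] by (rule someI_ex)
      then show ?thesis unfolding ee_def by (rule someI_ex)
    qed
    define A where "A i = insert u (vv ` {i..<T})" for i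
    define k where "k i = card (A i)" for i
    have A_fin: "finite (A i)" for i unfolding A_def by simp
    have A_ne: "A i \<noteq> {}" for i unfolding A_def by simp
    have k_pos: "k i \<ge> 1" for i unfolding k_def using A_fin A_ne
      by (simp add: Suc_leI card_gt_0_iff)
    have A_Suc: "A i = insert (vv i) (A (Suc i))" if "i < T" for i
    proof -
      have "{i..<T} = insert i {Suc i..<T}" using that by auto
      then show ?thesis unfolding A_def by auto
    qed
    have A_V: "A i \<subseteq> V" for i unfolding A_def using u(1) Pv unfolding P_def by auto
    have A_act: "active d (Ms i) w" if wA: "w \<in> A i" and iT: "i \<le> T" for i w
    proof -
      consider "w = u" | j where "j \<in> {i..<T}" "w = vv j" using wA unfolding A_def by blast
      then show ?thesis
      proof cases
        case 1
        then show ?thesis using active_anti[OF iT] u(2) by simp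
      next
        case 2
        then have "active d (Ms j) w" using Pv unfolding P_def by auto
        then show ?thesis using active_anti[of i j] 2 by auto
      qed
    qed
    have A_T: "A T = {u}" unfolding A_def by auto
    have k0: "k 0 \<le> card V" unfolding k_def using A_V finV by (intro card_mono) auto
    define Phi where "Phi i = SS ends b (Bs i) (Ms i) (A i) / real (k i)" for i
    define Psi where "Psi i = PN ends b (Bs i) (Ms i) (A i) / real (k i)" for i
    have Bsplit: "Bs (Suc i) = Bs i \<union> (Bs (Suc i) - Bs i)" for i using Bs_step(1)[of i] by auto
    have Nfacts: "finite (Bs (Suc i) - Bs i)" "Bs i \<inter> (Bs (Suc i) - Bs i) = {}"
      "\<forall>e\<in>Bs (Suc i) - Bs i. card (ends e) = 2" "card (Bs (Suc i) - Bs i) \<le> b" for i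
      using Bs_fin[of "Suc i"] Bs_E[of "Suc i"] ends2 Bs_step(2)[of i] by auto
    have Msplit: "Ms (Suc i) = insert (ee i, vv i) (Ms i)" "(ee i, vv i) \<notin> Ms i" if "i < T" for i
      using Pv[OF that] unfolding P_def by auto
    have maxd: "\<forall>w\<in>A (Suc i). dang ends b (Bs i) (Ms i) w \<le> dang ends b (Bs i) (Ms i) (vv i)"
      if "i < T" for i
    proof
      fix w assume w: "w \<in> A (Suc i)"
      then have "w \<in> A i" using A_Suc[OF that] by auto
      then have "active d (Ms i) w" "w \<in> V" using A_act that A_V by auto
      then show "dang ends b (Bs i) (Ms i) w \<le> dang ends b (Bs i) (Ms i) (vv i)"
        using Pv[OF that] unfolding P_def by auto
    qed
    have k_step: "k i = (if vv i \<in> A (Suc i) then k (Suc i) else k (Suc i) + 1)" if "i < T" for i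
      unfolding k_def A_Suc[OF that] using A_fin by (auto simp: insert_absorb)
    have Phi_st: "Phi (Suc i) \<le> Phi i + (if vv i \<in> A (Suc i) then 0 else 2 * real b / real (k (Suc i)))"
      if "i < T" for i
    proof -
      have "SS ends b (Bs i \<union> (Bs (Suc i) - Bs i)) (insert (ee i, vv i) (Ms i)) (A (Suc i)) / card (A (Suc i)) \<le>
        SS ends b (Bs i) (Ms i) (insert (vv i) (A (Suc i))) / card (insert (vv i) (A (Suc i))) +
        (if vv i \<in> A (Suc i) then 0 else 2 * real b / card (A (Suc i)))"
        by (rule Phi_step[OF Bs_fin Nfacts(1,2) Ms_fin Msplit(2)[OF that] A_fin A_ne Nfacts(3,4) maxd[OF that]])
      then show ?thesis unfolding Phi_def k_def A_Suc[OF that, symmetric]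
        using Bsplit[of i, symmetric] Msplit(1)[OF that, symmetric] by simp
    qed
    have Psi_st: "Psi (Suc i) \<le> Psi i + (if vv i \<in> A (Suc i) then 0 else real b / real (k (Suc i)) + real s)"
      if "i < T" for i
    proof -
      have cb: "card {e\<in>Bs i. vv i \<in> ends e \<and> ends e \<inter> A (Suc i) \<noteq> {}} \<le> s * card (A (Suc i))"
        if "vv i \<notin> A (Suc i)"
        using cbound[OF _ A_V A_fin that Bs_E] Pv[OF \<open>i < T\<close>] unfolding P_def by auto
      have "PN ends b (Bs i \<union> (Bs (Suc i) - Bs i)) (insert (ee i, vv i) (Ms i)) (A (Suc i)) / card (A (Suc i)) \<le>
        PN ends b (Bs i) (Ms i) (insert (vv i) (A (Suc i))) / card (insert (vv i) (A (Suc i))) +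
        (if vv i \<in> A (Suc i) then 0 else real b / card (A (Suc i)) + real s)"
        by (rule Psi_step[OF Bs_fin Nfacts(1,2) Ms_fin Msplit(2)[OF that] A_fin A_ne Nfacts(4) maxd[OF that] cb])
      then show ?thesis unfolding Psi_def k_def A_Suc[OF that, symmetric]
        using Bsplit[of i, symmetric] Msplit(1)[OF that, symmetric] by simp
    qed
    have Psi_Phi: "Psi i \<le> Phi i" for i
      unfolding Psi_def Phi_def using PN_le_SS[OF A_fin Bs_fin] k_pos
      by (intro divide_right_mono) auto
    define R where "R i = Phi i + 2 * real b * real (k i) / real m" for i
    define Q where "Q i = Psi i + real b * H (k i) + real s * real (k i)" for i
    have Q_st: "Q (Suc i) \<le> Q i" if "i < T" for i
    proof (cases "vv i \<in> A (Suc i)")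
      case True
      then show ?thesis using Psi_st[OF that] k_step[OF that] unfolding Q_def by simp
    next
      case False
      have "H (k i) = H (k (Suc i)) + 1 / real (k (Suc i))"
        using k_step[OF that] False H_Suc[OF k_pos] by simp
      then show ?thesis using Psi_st[OF that] k_step[OF that] False unfolding Q_def
        by (simp add: algebra_simps)
    qed
    have R_st: "R (Suc i) \<le> R i" if "i < T" "k (Suc i) \<ge> m" for i
    proof (cases "vv i \<in> A (Suc i)")
      case True
      then show ?thesis using Phi_st[OF that(1)] k_step[OF that(1)] unfolding R_def by simp
    next
      case False
      have "2 * real b / real (k (Suc i)) \<le> 2 * real b / real m"
        using that(2) mpos by (intro divide_left_mono) auto
      moreover have "2 * real b * real (k i) / real m = 2 * real b * real (k (Suc i)) / real m + 2 * real b / real m"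
        using k_step[OF that(1)] False by (simp add: add_divide_distrib algebra_simps)
      ultimately show ?thesis using Phi_st[OF that(1)] False unfolding R_def by simp
    qed
    have Phi0: "Phi 0 \<le> 2 * real b"
    proof -
      have "SS ends b (Bs 0) (Ms 0) (A 0) = real (\<Sum>w\<in>A 0. deg_in ends (Bs 0) w)"
        unfolding SS_def dang_def outdeg_def using play0(1) by simp
      also have "\<dots> \<le> 2 * real b"
      proof -
        have "\<forall>e\<in>Bs 0. card (ends e) = 2" using Bs_E ends2 by blast
        from degsum_le2[OF Bs_fin A_fin[of 0] this] Bs0
        have "(\<Sum>w\<in>A 0. deg_in ends (Bs 0) w) \<le> 2 * b" by linarith
        then show ?thesis by (metis of_nat_le_iff of_nat_mult of_nat_numeral)
      qed
      finally have "SS ends b (Bs 0) (Ms 0) (A 0) \<le> 2 * real b" .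
      moreover have "real (k 0) \<ge> 1" using k_pos by simp
      ultimately show ?thesis unfolding Phi_def
        by (smt (verit, ccfv_SIG) divide_le_eq_1 divide_nonneg_nonneg div_by_1 frac_le of_nat_0_le_iff)
    qed
    have QT: "dang ends b (Bs T) (Ms T) u \<le> Q T"
    proof -
      have "PN ends b (Bs T) (Ms T) {u} = dang ends b (Bs T) (Ms T) u"
        unfolding PN_def dang_def deg_in_def by simp
      moreover have "k T = 1" unfolding k_def A_T by simp
      moreover have "H (Suc 0) = 0" using H_one by simp
      ultimately show ?thesis unfolding Q_def Psi_def A_T by simp
    qed
    define j where "j = (LEAST i. k i \<le> m)"
    have kTm: "k T \<le> m" using mpos unfolding k_def A_T by simp
    have j1: "k j \<le> m" unfolding j_def using kTm by (rule LeastI)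
    have j2: "j \<le> T" unfolding j_def using kTm by (rule Least_le)
    have j3: "\<not> k i \<le> m" if "i < j" for i using not_less_Least[of i "\<lambda>i. k i \<le> m"] that unfolding j_def by auto
    have Rj: "R j \<le> R 0"
    proof -
      have "i \<le> j \<longrightarrow> R i \<le> R 0" for i
      proof (induction i)
        case 0 then show ?case by simp
      next
        case (Suc n)
        show ?case
        proof
          assume sj: "Suc n \<le> j"
          then have "\<not> k n \<le> m" using j3[of n] by auto
          then have "k n > m" by simp
          then have "k (Suc n) \<ge> m" using k_step[of n] sj j2 by (auto split: if_splits)
          then show "R (Suc n) \<le> R 0" using R_st[of n] Suc sj j2 by auto
        qed
      qed
      then show ?thesis by simp
    qed
    have Qi0: "j \<le> i \<longrightarrow> i \<le> T \<longrightarrow> Q i \<le> Q j" for i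
    proof (induction i)
      case 0 then show ?case by simp
    next
      case (Suc n)
      show ?case
      proof (intro impI)
        assume a: "j \<le> Suc n" "Suc n \<le> T"
        show "Q (Suc n) \<le> Q j"
        proof (cases "j = Suc n")
          case True then show ?thesis by simp
        next
          case False
          then show ?thesis using Suc a Q_st[of n] by auto
        qed
      qed
    qed
    have Qi: "Q i \<le> Q j" if "j \<le> i" "i \<le> T" for i using Qi0 that by blast
    have "dang ends b (Bs T) (Ms T) u \<le> Q j" using QT Qi[OF j2] by simp
    also have "Q j \<le> Psi j + real b * H m + real s * real m"
      unfolding Q_def using j1 H_mono[OF j1]
      by (intro add_mono mult_left_mono) auto
    also have "\<dots> \<le> R j + real b * H m + real s * real m"
    proof -
      have "0 \<le> 2 * real b * real (k j) / real m" by simp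
      then show ?thesis using Psi_Phi[of j] unfolding R_def by linarith
    qed
    also have "\<dots> \<le> R 0 + real b * H m + real s * real m" using Rj by simp
    also have "\<dots> \<le> 2 * real b + 2 * real b * real (card V) / real m + real b * H m + real s * real m"
    proof -
      have "2 * real b * real (k 0) / real m \<le> 2 * real b * real (card V) / real m"
        using k0 by (intro divide_right_mono mult_left_mono) auto
      then show ?thesis unfolding R_def using Phi0 by simp
    qed
    also have "\<dots> < D" by (rule Dbig)
    finally show False using u(3) by simp
  qed
qed

lemma wins: "maker_wins V E ends d \<alpha> Bs Ms"
  unfolding maker_wins_def
proof
  fix v assume v: "v \<in> V"
  show "\<exists>t. d \<le> real (outdeg (Ms t) v) \<and>
            (\<forall>i<t. real (deg_in ends (Bs i) v) < (1 - \<alpha>) * real (deg_in ends E v))"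
  proof (cases "\<exists>t. \<not> active d (Ms t) v")
    case True
    define t where "t = (LEAST t. \<not> active d (Ms t) v)"
    have t1: "\<not> active d (Ms t) v" unfolding t_def using True by (metis LeastI)
    have t2: "active d (Ms i) v" if "i < t" for i
      using not_less_Least[of i "\<lambda>t. \<not> active d (Ms t) v"] that unfolding t_def by auto
    show ?thesis
    proof (intro exI conjI allI impI)
      show "d \<le> real (outdeg (Ms t) v)" using t1 unfolding active_def by simp
      fix i assume "i < t"
      then have act: "active d (Ms i) v" by (rule t2)
      show "real (deg_in ends (Bs i) v) < (1 - \<alpha>) * real (deg_in ends E v)"
      proof (rule ccontr)
        assume "\<not> ?thesis"
        then have big: "real (deg_in ends (Bs i) v) \<ge> (1 - \<alpha>) * real (deg_in ends E v)" by simp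
        have "(1 - \<alpha>) * real (deg_in ends E v) \<ge> (1 - \<alpha>) * Dg"
          using degV v alpha1 by (intro mult_left_mono) auto
        moreover have "2 * real b * real (outdeg (Ms i) v) \<le> 2 * real b * d"
          using act unfolding active_def by (intro mult_left_mono) auto
        ultimately have "dang ends b (Bs i) (Ms i) v \<ge> D"
          using big Dalpha unfolding dang_def by linarith
        then show False using inv[of i] v act by auto
      qed
    qed
  next
    case False
    then have act: "active d (Ms t) v" for t by auto
    have mv: "splus_move V E ends d b (Bs t) (Ms t) (Ms (Suc t))" for t
      using moves[of t] inv[of t] act[of t] v by blast
    have cardM: "card (Ms t) = t" for t
    proof (induction t)
      case 0 then show ?case using play0 by simp
    next
      case (Suc t)
      obtain e w where "Ms (Suc t) = insert (e, w) (Ms t)" "(e, w) \<notin> Ms t"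
        using mv[of t] unfolding splus_move_def by blast
      then show ?case using Suc Ms_fin[of t] by simp
    qed
    have "card (Ms (Suc (card (E \<times> V)))) \<le> card (E \<times> V)"
      using Ms_sub finE finV by (intro card_mono) auto
    then show ?thesis using cardM by simp
  qed
qed

end

lemma H_le_ln_aux: "k \<ge> 1 \<Longrightarrow> H (Suc k) \<le> 1 + ln (real k)"
proof (induction k rule: dec_induct)
  case base
  then show ?case unfolding H_def by simp
next
  case (step k)
  have kpos: "real k > 0" using step by simp
  have "ln (real k / real (Suc k)) \<le> real k / real (Suc k) - 1"
    using kpos by (intro ln_le_minus_one) auto
  moreover have "real k / real (Suc k) - 1 = - (1 / real (Suc k))" by (simp add: field_simps)
  moreover have "ln (real k / real (Suc k)) = ln (real k) - ln (real (Suc k))"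
    using kpos by (simp add: ln_div)
  ultimately have "1 / real (Suc k) \<le> ln (real (Suc k)) - ln (real k)" by linarith
  moreover have "H (Suc (Suc k)) = H (Suc k) + 1 / real (Suc k)" using H_Suc[of "Suc k"] by simp
  ultimately show ?case using step.IH by linarith
qed

lemma H_le_ln: "m \<ge> 1 \<Longrightarrow> H m \<le> 1 + ln (real m)"
  using H_le_ln_aux[of m] H_mono[of m "Suc m"] by simp

lemma numeric:
  fixes \<delta> \<epsilon> :: real and n s b m :: nat
  assumes "\<delta> > 0" "\<epsilon> > 0" "\<epsilon> < \<delta> / 10" "n \<ge> 3"
    "exp (4 * (3 + 4 / \<epsilon>) / \<delta>) \<le> real n" "8 / \<delta> \<le> real n" "s \<ge> 1" "b \<ge> 1"
    "real b \<le> (1 - \<delta>) * real s * real n / ln (real n)"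
    "\<epsilon> * real n \<le> real m" "real m \<le> \<epsilon> * real n + 1" "m \<le> n" "m \<ge> 1"
  shows "2 * real b + 2 * real b * real (2 * n) / real m + real b * H m + real s * real m
          < (1 - \<epsilon>) * (real s * (real n - 1)) - 3 * \<epsilon> * real s * real n"
proof -
  define L where "L = ln (real n)"
  define C where "C = 3 + 4 / \<epsilon>"
  have npos: "real n > 0" using assms(4) by simp
  have Lpos: "L > 0" unfolding L_def using assms(4) by simp
  have hL: "L \<ge> 4 * C / \<delta>" unfolding L_def C_def
    using assms(5) npos by (metis exp_le_cancel_iff exp_ln)
  have hbL: "real b * L \<le> (1 - \<delta>) * real s * real n"
    using assms(9) Lpos unfolding L_def by (simp add: pos_le_divide_eq)
  have hb1: "real b \<le> real s * real n / L"
  proof -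
    have "(1 - \<delta>) * (real s * real n) \<le> 1 * (real s * real n)" using assms(1) npos
      by (intro mult_right_mono) auto
    then have "(1 - \<delta>) * real s * real n \<le> real s * real n" by (simp add: mult.assoc)
    then show ?thesis using assms(9) Lpos unfolding L_def by (simp add: divide_right_mono order_trans)
  qed
  have CL: "C / L \<le> \<delta> / 4"
    using hL Lpos assms(1) by (simp add: divide_le_eq field_simps)
  have Cpos: "C > 0"
  proof -
    have "4 / \<epsilon> > 0" using assms(2) by simp
    then show ?thesis unfolding C_def by linarith
  qed
  have hbC: "real b * C \<le> \<delta> / 4 * (real s * real n)"
  proof -
    have "real b * C \<le> (real s * real n / L) * C" using hb1 Cpos by (intro mult_right_mono) auto
    also have "\<dots> = (real s * real n) * (C / L)" by simp
    also have "\<dots> \<le> (real s * real n) * (\<delta> / 4)" using CL by (intro mult_left_mono) auto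
    finally show ?thesis by (simp add: mult.commute)
  qed
  have hH: "real b * H m \<le> real b + real b * L"
  proof -
    have "H m \<le> 1 + L" unfolding L_def using H_le_ln[OF assms(13)] assms(12) npos assms(13)
      by (smt (verit, best) ln_le_cancel_iff of_nat_0_less_iff of_nat_le_iff less_le_trans zero_less_one of_nat_1)
    then show ?thesis by (metis distrib_left mult.right_neutral mult_left_mono of_nat_0_le_iff)
  qed
  have hm: "2 * real b * real (2 * n) / real m \<le> 4 * real b / \<epsilon>"
  proof -
    have mpos: "real m > 0" using assms(13) by simp
    have "real (2 * n) / real m \<le> 2 / \<epsilon>"
      using assms(10) mpos assms(2) npos by (simp add: divide_le_eq field_simps)
    then have "2 * real b * (real (2 * n) / real m) \<le> 2 * real b * (2 / \<epsilon>)"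
      by (intro mult_left_mono) auto
    then show ?thesis by simp
  qed
  have hs: "real s * real m \<le> \<epsilon> * (real s * real n) + real s"
  proof -
    have "real s * real m \<le> real s * (\<epsilon> * real n + 1)" using assms(11) by (intro mult_left_mono) auto
    then show ?thesis by (simp add: algebra_simps)
  qed
  have bC: "real b * C = 3 * real b + 4 * real b / \<epsilon>" unfolding C_def by (simp add: algebra_simps)
  have LHS: "2 * real b + 2 * real b * real (2 * n) / real m + real b * H m + real s * real m
      \<le> \<delta> / 4 * (real s * real n) + (1 - \<delta>) * real s * real n + \<epsilon> * (real s * real n) + real s"
    using hbC hbL hH hm hs bC by linarith
  have key: "real s * (real n * (3 * \<delta> / 4 - 5 * \<epsilon>) - 2) > 0"
  proof -
    have "real n * (3 * \<delta> / 4 - 5 * \<epsilon>) \<ge> real n * (\<delta> / 4)"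
      using assms(3) npos by (intro mult_left_mono) auto
    moreover have "real n * (\<delta> / 4) \<ge> 2" using assms(6) assms(1) by (simp add: divide_le_eq field_simps)
    moreover have "real n * (\<delta> / 4) > 2 \<or> real n * (3 * \<delta> / 4 - 5 * \<epsilon>) > real n * (\<delta> / 4)"
      using assms(3) npos by auto
    ultimately have "real n * (3 * \<delta> / 4 - 5 * \<epsilon>) - 2 > 0" by linarith
    then show ?thesis using assms(7) by simp
  qed
  have eq: "(1 - \<epsilon>) * (real s * (real n - 1)) - 3 * \<epsilon> * real s * real n
      - (\<delta> / 4 * (real s * real n) + (1 - \<delta>) * real s * real n + \<epsilon> * (real s * real n) + real s)
      = real s * (real n * (3 * \<delta> / 4 - 5 * \<epsilon>) - 2) + \<epsilon> * real s"
    by (simp add: algebra_simps)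
  have "\<epsilon> * real s \<ge> 0" using assms(2) by simp
  then show ?thesis using LHS key eq by linarith
qed

lemma deg_lower:
  assumes "finite E" "finite W" "x \<in> W" "card W = n"
    "\<forall>y\<in>W. y \<noteq> x \<longrightarrow> card {e\<in>E. ends e = {x, y}} = s"
  shows "s * (n - 1) \<le> deg_in ends E x"
proof -
  let ?F = "\<lambda>y. {e\<in>E. ends e = {x, y}}"
  have "card (\<Union>y\<in>W - {x}. ?F y) = (\<Sum>y\<in>W - {x}. card (?F y))"
  proof (rule card_UN_disjoint)
    show "finite (W - {x})" using assms(2) by simp
    show "\<forall>i\<in>W - {x}. finite (?F i)" using assms(1) by simp
    show "\<forall>i\<in>W - {x}. \<forall>j\<in>W - {x}. i \<noteq> j \<longrightarrow> ?F i \<inter> ?F j = {}"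
    proof (intro ballI impI)
      fix i j assume "i \<in> W - {x}" "j \<in> W - {x}" "i \<noteq> j"
      then have "{x, i} \<noteq> {x, j}" by (metis doubleton_eq_iff)
      then show "?F i \<inter> ?F j = {}" by auto
    qed
  qed
  also have "\<dots> = (\<Sum>y\<in>W - {x}. s)" using assms(5) by (intro sum.cong) auto
  also have "\<dots> = s * (n - 1)" using assms(2-4) by simp
  finally have eq: "card (\<Union>y\<in>W - {x}. ?F y) = s * (n - 1)" .
  have "card (\<Union>y\<in>W - {x}. ?F y) \<le> deg_in ends E x"
    unfolding deg_in_def using assms(1) by (intro card_mono) auto
  then show ?thesis using eq by simp
qed

theorem lemma2p6:
  fixes \<delta> :: real
  assumes "\<delta> > 0"
  shows "\<exists>\<epsilon>'>0. \<forall>\<epsilon>::real. 0 < \<epsilon> \<and> \<epsilon> < \<epsilon>' \<longrightarrow>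
           (\<exists>N::nat. \<forall>n\<ge>N. \<forall>(s'::nat) (b::nat) (V1::nat set) (V2::nat set) (E::nat set)
              (ends::nat \<Rightarrow> nat set).
              s' \<ge> 1 \<and> b \<ge> 1 \<and> two_multicliques V1 V2 E ends n s' \<and>
              real b \<le> (1 - \<delta>) * real s' * real n / ln (real n) \<longrightarrow>
              splus_winning (V1 \<union> V2) E ends (\<epsilon> * real s' * real n / real b) b \<epsilon>)"
proof (intro exI[of _ "min (\<delta> / 10) (1 / 2)"] conjI allI impI)
  show "min (\<delta> / 10) (1 / 2) > 0" using assms by simp
  fix \<epsilon> :: real
  assume eps: "0 < \<epsilon> \<and> \<epsilon> < min (\<delta> / 10) (1 / 2)"
  then have e0: "0 < \<epsilon>" and e1: "\<epsilon> < \<delta> / 10" and e2: "\<epsilon> < 1 / 2" by auto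
  define N :: nat where "N = nat \<lceil>exp (4 * (3 + 4 / \<epsilon>) / \<delta>) + 8 / \<delta>\<rceil> + 3"
  show "\<exists>N::nat. \<forall>n\<ge>N. \<forall>(s'::nat) (b::nat) (V1::nat set) (V2::nat set) (E::nat set)
              (ends::nat \<Rightarrow> nat set).
              s' \<ge> 1 \<and> b \<ge> 1 \<and> two_multicliques V1 V2 E ends n s' \<and>
              real b \<le> (1 - \<delta>) * real s' * real n / ln (real n) \<longrightarrow>
              splus_winning (V1 \<union> V2) E ends (\<epsilon> * real s' * real n / real b) b \<epsilon>"
  proof (intro exI[of _ N] allI impI)
    fix n s' b :: nat and V1 V2 E :: "nat set" and ends :: "nat \<Rightarrow> nat set"
    assume nN: "N \<le> n"
    assume H: "s' \<ge> 1 \<and> b \<ge> 1 \<and> two_multicliques V1 V2 E ends n s' \<and>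
              real b \<le> (1 - \<delta>) * real s' * real n / ln (real n)"
    then have s1: "s' \<ge> 1" and b1: "b \<ge> 1" and tm: "two_multicliques V1 V2 E ends n s'"
      and bb: "real b \<le> (1 - \<delta>) * real s' * real n / ln (real n)" by auto
    have n3: "n \<ge> 3" using nN unfolding N_def by simp
    have nbig: "exp (4 * (3 + 4 / \<epsilon>) / \<delta>) + 8 / \<delta> \<le> real n"
    proof -
      let ?x = "exp (4 * (3 + 4 / \<epsilon>) / \<delta>) + 8 / \<delta>"
      have a: "?x \<le> real (nat \<lceil>?x\<rceil>)" by (rule real_nat_ceiling_ge)
      have "nat \<lceil>?x\<rceil> \<le> n" using nN unfolding N_def by linarith
      then have "real (nat \<lceil>?x\<rceil>) \<le> real n" by (simp only: of_nat_le_iff)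
      then show ?thesis using a by linarith
    qed
    have n_exp: "exp (4 * (3 + 4 / \<epsilon>) / \<delta>) \<le> real n" using nbig assms by (smt (verit) divide_pos_pos)
    have n_8: "8 / \<delta> \<le> real n" using nbig by (smt (verit) exp_gt_zero)
    define m :: nat where "m = nat \<lceil>\<epsilon> * real n\<rceil>"
    have npos: "real n > 0" using n3 by simp
    have m1: "\<epsilon> * real n \<le> real m" unfolding m_def by (rule real_nat_ceiling_ge)
    have m2: "real m \<le> \<epsilon> * real n + 1"
    proof -
      have "0 \<le> \<epsilon> * real n" using e0 npos by simp
      then have "0 \<le> \<lceil>\<epsilon> * real n\<rceil>" by linarith
      then have "real m = real_of_int \<lceil>\<epsilon> * real n\<rceil>" unfolding m_def by simp
      then show ?thesis using of_int_ceiling_le_add_one[of "\<epsilon> * real n"] by linarith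
    qed
    have m3: "m \<le> n"
    proof -
      have "\<epsilon> * real n \<le> real n" using e2 npos by simp
      then show ?thesis unfolding m_def by (simp add: nat_le_iff ceiling_le_iff)
    qed
    have m4: "m \<ge> 1"
    proof -
      have "\<epsilon> * real n > 0" using e0 npos by simp
      then show ?thesis unfolding m_def by linarith
    qed
    define d where "d = \<epsilon> * real s' * real n / real b"
    define Dg where "Dg = real s' * (real n - 1)"
    define D where "D = (1 - \<epsilon>) * (real s' * (real n - 1)) - 3 * \<epsilon> * real s' * real n"
    have finV: "finite (V1 \<union> V2)" and finE: "finite E" using tm unfolding two_multicliques_def by auto
    have cardV: "card (V1 \<union> V2) = 2 * n" using tm unfolding two_multicliques_def
      by (simp add: card_Un_disjoint)
    have ends2: "\<forall>e\<in>E. card (ends e) = 2 \<and> ends e \<subseteq> V1 \<union> V2" using tm unfolding two_multicliques_def by blast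
    have pairs: "\<forall>x\<in>V1 \<union> V2. \<forall>y\<in>V1 \<union> V2. x \<noteq> y \<longrightarrow> card {e\<in>E. ends e = {x, y}} \<le> s'"
    proof (intro ballI impI)
      fix x y assume xy: "x \<in> V1 \<union> V2" "y \<in> V1 \<union> V2" "x \<noteq> y"
      show "card {e\<in>E. ends e = {x, y}} \<le> s'"
      proof (cases "(x \<in> V1 \<and> y \<in> V1) \<or> (x \<in> V2 \<and> y \<in> V2)")
        case True
        then show ?thesis using tm xy unfolding two_multicliques_def by auto
      next
        case False
        have emp: "{e\<in>E. ends e = {x, y}} = {}"
        proof (rule ccontr)
          assume "{e\<in>E. ends e = {x, y}} \<noteq> {}"
          then obtain e where "e \<in> E" "ends e = {x, y}" by auto
          then have "{x, y} \<subseteq> V1 \<or> {x, y} \<subseteq> V2" using tm unfolding two_multicliques_def by metis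
          then show False using False by auto
        qed
        show ?thesis unfolding emp by simp
      qed
    qed
    have degV: "\<forall>x\<in>V1 \<union> V2. real (deg_in ends E x) \<ge> Dg"
    proof
      fix x assume x: "x \<in> V1 \<union> V2"
      have "s' * (n - 1) \<le> deg_in ends E x"
      proof (cases "x \<in> V1")
        case True
        show ?thesis
          by (rule deg_lower[of E V1]) (use tm True in \<open>auto simp: two_multicliques_def\<close>)
      next
        case False
        then have "x \<in> V2" using x by auto
        then show ?thesis
          by (intro deg_lower[of E V2]) (use tm in \<open>auto simp: two_multicliques_def\<close>)
      qed
      then have "real (s' * (n - 1)) \<le> real (deg_in ends E x)" by linarith
      moreover have "real (s' * (n - 1)) = Dg" unfolding Dg_def using n3 by (simp add: of_nat_diff)
      ultimately show "real (deg_in ends E x) \<ge> Dg" by simp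
    qed
    have bpos: "real b > 0" using b1 by simp
    have X0: "\<epsilon> * real s' * real n \<ge> 0" using e0 by simp
    have twobd: "2 * real b * d = 2 * (\<epsilon> * real s' * real n)" unfolding d_def using bpos by simp
    have threebd: "(2 * real b + 1) * d \<le> 3 * (\<epsilon> * real s' * real n)"
    proof -
      have "(2 * real b + 1) * d = (2 * real b + 1) / real b * (\<epsilon> * real s' * real n)"
        unfolding d_def by simp
      also have "\<dots> \<le> 3 * (\<epsilon> * real s' * real n)"
      proof (rule mult_right_mono)
        show "(2 * real b + 1) / real b \<le> 3" using bpos b1 by (simp add: divide_le_eq)
      qed (use X0 in auto)
      finally show ?thesis .
    qed
    have Dg0: "Dg \<ge> 0" unfolding Dg_def using n3 by simp
    have Dstuck: "D \<le> Dg - (2 * real b + 1) * d"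
    proof -
      have "(1 - \<epsilon>) * Dg \<le> Dg" using e0 Dg0 by (simp add: algebra_simps)
      then show ?thesis using threebd unfolding D_def Dg_def by linarith
    qed
    have Dalpha: "D \<le> (1 - \<epsilon>) * Dg - 2 * real b * d"
      using twobd X0 unfolding D_def Dg_def by linarith
    have Dbig: "2 * real b + 2 * real b * real (card (V1 \<union> V2)) / real m + real b * H m + real s' * real m < D"
      unfolding cardV D_def
      by (rule numeric[OF assms e0 e1 n3 n_exp n_8 s1 b1 bb m1 m2 m3 m4])
    show "splus_winning (V1 \<union> V2) E ends (\<epsilon> * real s' * real n / real b) b \<epsilon>"
      unfolding splus_winning_def
    proof (intro allI impI)
      fix Bs Ms assume pl: "splus_play (V1 \<union> V2) E ends (\<epsilon> * real s' * real n / real b) b Bs Ms"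
      interpret G: game "V1 \<union> V2" E ends d b Bs Ms s' m D Dg \<epsilon>
      proof
        show "splus_play (V1 \<union> V2) E ends d b Bs Ms" using pl unfolding d_def .
      qed (use finV finE ends2 pairs degV Dstuck m4 Dbig e2 Dalpha in auto)
      show "maker_wins (V1 \<union> V2) E ends (\<epsilon> * real s' * real n / real b) \<epsilon> Bs Ms"
        using G.wins unfolding d_def .
    qed
  qed
qed

end
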